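(* Assume hypotheses (A) and (B), and let $\rho=(\rho_1,\dots,\rho_d)$ satisfy $(\rho P)_i<\rho_i$ for all $i$. For $\varepsilon>0$ define $$h_{\varepsilon,\rho}(x)=\sum_{i=1}^d\prod_{j=1}^d\bigl(1+\varepsilon G_{ji}/\rho_i\bigr)^{x^j},\qquad x=(x^1,\dots,x^d)\in\mathbb{Z}_+^d.$$ Then $$\limsup_{|x|\to\infty}\frac{\mathcal{L}h_{\varepsilon,\rho}(x)}{h_{\varepsilon,\rho}(x)}=-\varepsilon\min_{1\le i\le d}\Bigl(\frac{\mu_i}{\rho_i+\varepsilon G_{ii}}-\frac{\nu_i}{\rho_i}\Bigr)<0$$ whenever the vector $(\varepsilon G_{ii}/\rho_i)_{1\le i\le d}$ belongs to $\Gamma$ and $0<\varepsilon<\min_i\frac{\rho_i}{G_{ii}}\bigl(\frac{\mu_i}{\nu_i}-1\bigr)$; in particular this holds whenever $$0<\varepsilon<\min_{1\le i\le d}\min\Bigl\{\frac{\rho_i}{G_{ii}}x_\rho,\ \frac{\rho_i}{G_{ii}}\Bigl(\frac{\mu_i}{\nu_i}-1\Bigr)\Bigr\}.$$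
   Context: Jackson network with $d$ queues: arrival rates $\lambda_i\ge0$, service rates $\mu_i>0$, routing matrix $P=(p_{ij})_{i,j=1}^d$ nonnegative with $p_{ii}=0$, $\sum_jp_{ij}\le1$, $p_{i0}=1-\sum_jp_{ij}$. With $\epsilon^i$ the unit vectors, let $q(\epsilon^i)=\lambda_i$, $q(-\epsilon^i)=\mu_ip_{i0}$, $q(\epsilon^j-\epsilon^i)=\mu_ip_{ij}$, $q=0$ otherwise; the process $(Z(t))$ on $\mathbb{Z}_+^d$ has generator $\mathcal{L}f(y)=\sum_{z\in\mathbb{Z}_+^d}q(z-y)(f(z)-f(y))$. Hypothesis (A): $(q(x-y))_{x,y\in\mathbb{Z}^d}$ is irreducible (equivalently spectral radius of $P$ $<1$ and for every $i$ some $\lambda_jp^{(n)}_{ji}>0$). Then the traffic equations $\nu_j=\lambda_j+\sum_i\nu_ip_{ij}$ have a unique solution with $\nu_i>0$. Hypothesis (B): $\nu_i<\mu_i$ for all $i$. $G=(I-P)^{-1}$, $(\rho P)_i=\sum_j\rho_jp_{ji}$, $\mathcal{R}(\rho)=\max_i(\rho P)_i/\rho_i$, $x_\rho=\sup\{x>0:\log(1+x)\ge\mathcal{R}(\rho)x\}$. $Q_{ij}$ is the probability that the chain on $\{0,\dots,d\}$ with transitions $p_{ij}$ ($0$ absorbing) started at $i$ ever visits $j$ (time $0$ included). For $\gamma\in\mathbb{R}_+^d$, $\overrightarrow{\gamma_i}$ has components $\gamma_i^j=\log(1+Q_{ji}\gamma_i)$; $\Gamma$ is the set of $\gamma\in\mathbb{R}_+^d$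 such that for every $i$ and nonzero $v\in\mathbb{R}_+^d$ with $v^i=0$, $\overrightarrow{\gamma_i}\cdot v<\max_j\overrightarrow{\gamma_j}\cdot v$. *)

theory Defs
  imports "HOL-Analysis.Analysis"
begin

text \<open>Jackson network with queues indexed by a finite type 'd (so d = CARD('d)).
  Arrival rates lam, service rates mu (vectors), routing matrix P with entries P$i$j = p_ij.\<close>

definition exit_prob :: "real^'d^'d \<Rightarrow> 'd \<Rightarrow> real" where
  "exit_prob P i = 1 - (\<Sum>j\<in>UNIV. P$i$j)"

definition jrate :: "real^'d \<Rightarrow> real^'d \<Rightarrow> real^'d^'d \<Rightarrow> int^'d \<Rightarrow> real" where
  "jrate lam mu P z =
     (\<Sum>i\<in>UNIV. if z = axis i 1 then lam$i else 0)
   + (\<Sum>i\<in>UNIV. if z = - axis i 1 then mu$i * exit_prob P i else 0)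
   + (\<Sum>i\<in>UNIV. \<Sum>j\<in>UNIV. if j \<noteq> i \<and> z = axis j 1 - axis i 1 then mu$i * P$i$j else 0)"

definition nonneg_lattice :: "(int^'d) set" where
  "nonneg_lattice = {x. \<forall>k. 0 \<le> x$k}"

text \<open>Generator: L f(y) = sum over z in Z_+^d of q(z-y)(f z - f y); only finitely many terms
  are nonzero, so we sum over those.\<close>
definition jgen :: "real^'d \<Rightarrow> real^'d \<Rightarrow> real^'d^'d \<Rightarrow> (int^'d \<Rightarrow> real) \<Rightarrow> int^'d \<Rightarrow> real" where
  "jgen lam mu P f y =
     (\<Sum>z\<in>{z\<in>nonneg_lattice. jrate lam mu P (z - y) \<noteq> 0}. jrate lam mu P (z - y) * (f z - f y))"

definition hypA :: "real^'d \<Rightarrow> real^'d \<Rightarrow> real^'d^'d \<Rightarrow> bool" where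
  "hypA lam mu P \<longleftrightarrow> (\<forall>x y :: int^'d. (x, y) \<in> {(a, b). 0 < jrate lam mu P (b - a)}\<^sup>*)"

definition Gmat :: "real^'d^'d \<Rightarrow> real^'d^'d" where
  "Gmat P = matrix_inv (mat 1 - P)"

definition hfun :: "real^'d^'d \<Rightarrow> real \<Rightarrow> real^'d \<Rightarrow> int^'d \<Rightarrow> real" where
  "hfun P eps \<rho> x = (\<Sum>i\<in>UNIV. \<Prod>j\<in>UNIV. (1 + eps * Gmat P $j$i / \<rho>$i) ^ nat (x$j))"

definition Rcal :: "real^'d^'d \<Rightarrow> real^'d \<Rightarrow> real" where
  "Rcal P \<rho> = Max (range (\<lambda>i. (\<Sum>j\<in>UNIV. \<rho>$j * P$j$i) / \<rho>$i))"

text \<open>x_rho as an extended real (it is +infinity when R(rho) = 0).\<close>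
definition xrho :: "real^'d^'d \<Rightarrow> real^'d \<Rightarrow> ereal" where
  "xrho P \<rho> = Sup (ereal ` {x. 0 < x \<and> ln (1 + x) \<ge> Rcal P \<rho> * x})"

definition walk_prob :: "real^'d^'d \<Rightarrow> 'd list \<Rightarrow> real" where
  "walk_prob P ws = (\<Prod>k<length ws - 1. P $ (ws!k) $ (ws!(Suc k)))"

text \<open>Q_ij: probability that the chain on {0,...,d} with transitions p_ij (0 absorbing),
  started at i, ever visits j (time 0 included).\<close>
definition Qhit :: "real^'d^'d \<Rightarrow> 'd \<Rightarrow> 'd \<Rightarrow> real" where
  "Qhit P i j = (if i = j then 1 else
     (\<Sum>n. \<Sum>xs\<in>{xs. length xs = n \<and> j \<notin> set xs}. walk_prob P (i # xs @ [j])))"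

definition gvec :: "real^'d^'d \<Rightarrow> real^'d \<Rightarrow> 'd \<Rightarrow> real^'d" where
  "gvec P \<gamma> i = (\<chi> j. ln (1 + Qhit P j i * \<gamma>$i))"

definition Gamma_set :: "real^'d^'d \<Rightarrow> (real^'d) set" where
  "Gamma_set P = {\<gamma>. (\<forall>i. 0 \<le> \<gamma>$i) \<and>
     (\<forall>i. \<forall>v::real^'d. (\<forall>k. 0 \<le> v$k) \<and> v \<noteq> 0 \<and> v$i = 0 \<longrightarrow>
        gvec P \<gamma> i \<bullet> v < Max (range (\<lambda>j. gvec P \<gamma> j \<bullet> v)))}"

definition at_infty_lattice :: "(int^'d) filter" where
  "at_infty_lattice = inf (filtercomap (\<lambda>x. \<Sum>k\<in>UNIV. \<bar>x$k\<bar>) at_top) (principal nonneg_lattice)"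

end

theory Submission
  imports Defs
begin


locale net =
  fixes P :: "real^'d^'d" and \<rho> :: "real^'d"
  assumes P_nonneg: "\<forall>i j. 0 \<le> P$i$j"
    and P_diag: "\<forall>i. P$i$i = 0"
    and P_sub: "\<forall>i. (\<Sum>j\<in>UNIV. P$i$j) \<le> 1"
    and rho_pos: "\<forall>i. 0 < \<rho>$i"
    and rho_sub: "\<forall>i. (\<Sum>j\<in>UNIV. \<rho>$j * P$j$i) < \<rho>$i"
begin

lemma subharm_zero:
  fixes x :: "'d \<Rightarrow> real"
  assumes nn: "\<And>k. 0 \<le> x k" and sh: "\<And>k. x k \<le> (\<Sum>l\<in>UNIV. P$k$l * x l)"
  shows "x k = 0"
proof (rule ccontr)
  assume "x k \<noteq> 0"
  hence xk: "0 < x k" using nn[of k] by auto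
  have "(\<Sum>k\<in>UNIV. \<rho>$k * x k) \<le> (\<Sum>k\<in>UNIV. \<rho>$k * (\<Sum>l\<in>UNIV. P$k$l * x l))"
    by (rule sum_mono) (use rho_pos sh in \<open>auto intro: mult_left_mono less_imp_le\<close>)
  also have "\<dots> = (\<Sum>l\<in>UNIV. (\<Sum>k\<in>UNIV. \<rho>$k * P$k$l) * x l)"
    unfolding sum_distrib_left sum_distrib_right
    by (subst sum.swap) (simp add: mult.assoc)
  also have "\<dots> < (\<Sum>l\<in>UNIV. \<rho>$l * x l)"
  proof (rule sum_strict_mono_ex1)
    show "\<forall>l\<in>UNIV. (\<Sum>k\<in>UNIV. \<rho>$k * P$k$l) * x l \<le> \<rho>$l * x l"
      using rho_sub nn by (auto intro: mult_right_mono less_imp_le)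
    show "\<exists>l\<in>UNIV. (\<Sum>k\<in>UNIV. \<rho>$k * P$k$l) * x l < \<rho>$l * x l"
      using rho_sub[rule_format, of k] xk by (intro bexI[of _ k]) (auto intro: mult_strict_right_mono)
  qed simp
  finally show False by simp
qed

lemma IP_inj: "(mat 1 - P) *v x = 0 \<Longrightarrow> x = 0"
proof -
  assume h: "(mat 1 - P) *v x = 0"
  have eq: "x$k = (\<Sum>l\<in>UNIV. P$k$l * x$l)" for k
  proof -
    have "((mat 1 - P) *v x)$k = 0" using h by simp
    thus ?thesis
      by (simp add: matrix_vector_mult_def mat_def algebra_simps sum_subtractf
          if_distrib[where f="\<lambda>t. _ * t"] cong: if_cong)
  qed
  have "\<bar>x$k\<bar> = 0" for k
  proof (rule subharm_zero[of "\<lambda>k. \<bar>x$k\<bar>"])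
    fix k show "\<bar>x$k\<bar> \<le> (\<Sum>l\<in>UNIV. P$k$l * \<bar>x$l\<bar>)"
      apply (subst eq)
      apply (rule order.trans[OF sum_abs])
      using P_nonneg by (simp add: abs_mult)
  qed simp
  thus "x = 0" by (simp add: vec_eq_iff)
qed

lemma invertible_IP: "invertible (mat 1 - P)"
proof -
  obtain B where B: "B ** (mat 1 - P) = mat 1"
    using matrix_left_invertible_ker[of "mat 1 - P"] IP_inj by blast
  thus ?thesis unfolding invertible_def
    using matrix_left_right_inverse by blast
qed

lemma G_inv: "(mat 1 - P) ** Gmat P = mat 1" "Gmat P ** (mat 1 - P) = mat 1"
  using someI_ex[OF invertible_IP[unfolded invertible_def]]
  unfolding Gmat_def matrix_inv_def by auto


abbreviation "G \<equiv> Gmat P"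

lemma G_eq1: "G$k$j = (if k = j then 1 else 0) + (\<Sum>l\<in>UNIV. P$k$l * G$l$j)"
proof -
  have "((mat 1 - P) ** G)$k$j = (if k = j then 1 else 0)" using G_inv(1) by (simp add: mat_def)
  moreover have "((mat 1 - P) ** G)$k$j = G$k$j - (\<Sum>l\<in>UNIV. P$k$l * G$l$j)"
    by (simp add: matrix_matrix_mult_def mat_def left_diff_distrib sum_subtractf
        if_distrib[where f="\<lambda>t. t * _"] cong: if_cong)
  ultimately show ?thesis by simp
qed

lemma G_eq2: "G$k$j = (if k = j then 1 else 0) + (\<Sum>l\<in>UNIV. G$k$l * P$l$j)"
proof -
  have "(G ** (mat 1 - P))$k$j = (if k = j then 1 else 0)" using G_inv(2) by (simp add: mat_def)
  moreover have "(G ** (mat 1 - P))$k$j = G$k$j - (\<Sum>l\<in>UNIV. G$k$l * P$l$j)"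
    by (simp add: matrix_matrix_mult_def mat_def right_diff_distrib sum_subtractf
        if_distrib[where f="\<lambda>t. _ * t"] cong: if_cong)
  ultimately show ?thesis by simp
qed

lemma G_nonneg: "0 \<le> G$k$j"
proof -
  have "max 0 (- G$k$j) = 0"
  proof (rule subharm_zero[of "\<lambda>k. max 0 (- G$k$j)"])
    fix k
    have "0 \<le> (\<Sum>l\<in>UNIV. P$k$l * max 0 (- G$l$j))"
      using P_nonneg by (auto intro: sum_nonneg)
    moreover have "- G$k$j \<le> (\<Sum>l\<in>UNIV. P$k$l * max 0 (- G$l$j))"
    proof -
      have "- G$k$j \<le> (\<Sum>l\<in>UNIV. P$k$l * (- G$l$j))"
        by (subst G_eq1) (simp add: sum_negf)
      also have "\<dots> \<le> (\<Sum>l\<in>UNIV. P$k$l * max 0 (- G$l$j))"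
        using P_nonneg by (intro sum_mono mult_left_mono) auto
      finally show ?thesis .
    qed
    ultimately show "max 0 (- G$k$j) \<le> (\<Sum>l\<in>UNIV. P$k$l * max 0 (- G$l$j))" by simp
  qed simp
  thus ?thesis by simp
qed

lemma G_diag: "1 \<le> G$j$j"
proof -
  have "0 \<le> (\<Sum>l\<in>UNIV. P$j$l * G$l$j)"
    using P_nonneg G_nonneg by (auto intro: sum_nonneg)
  thus ?thesis by (subst G_eq1) simp
qed

lemma G_le_diag: "G$k$j \<le> G$j$j"
proof -
  have "max 0 (G$k$j - G$j$j) = 0"
  proof (rule subharm_zero[of "\<lambda>k. max 0 (G$k$j - G$j$j)"])
    fix k
    have "0 \<le> (\<Sum>l\<in>UNIV. P$k$l * max 0 (G$l$j - G$j$j))"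
      using P_nonneg by (auto intro: sum_nonneg)
    moreover have "G$k$j - G$j$j \<le> (\<Sum>l\<in>UNIV. P$k$l * max 0 (G$l$j - G$j$j))" if "k \<noteq> j"
    proof -
      have "G$k$j - G$j$j = (\<Sum>l\<in>UNIV. P$k$l * G$l$j) - G$j$j"
        using that by (subst G_eq1) simp
      also have "\<dots> \<le> (\<Sum>l\<in>UNIV. P$k$l * G$l$j) - (\<Sum>l\<in>UNIV. P$k$l) * G$j$j"
        using P_sub G_diag[of j] by (intro diff_left_mono) (auto intro: mult_left_le_one_le)
      also have "\<dots> = (\<Sum>l\<in>UNIV. P$k$l * (G$l$j - G$j$j))"
        by (simp add: sum_distrib_right right_diff_distrib sum_subtractf)
      also have "\<dots> \<le> (\<Sum>l\<in>UNIV. P$k$l * max 0 (G$l$j - G$j$j))"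
        using P_nonneg by (intro sum_mono mult_left_mono) auto
      finally show ?thesis .
    qed
    ultimately show "max 0 (G$k$j - G$j$j) \<le> (\<Sum>l\<in>UNIV. P$k$l * max 0 (G$l$j - G$j$j))"
      by (cases "k = j") auto
  qed simp
  thus ?thesis by simp
qed

end


definition Lst :: "'d \<Rightarrow> nat \<Rightarrow> 'd list set" where
  "Lst j n = {xs. length xs = n \<and> j \<notin> set xs}"

definition Sw :: "real^'d^'d \<Rightarrow> 'd \<Rightarrow> nat \<Rightarrow> 'd \<Rightarrow> real" where
  "Sw P j n k = (\<Sum>xs\<in>Lst j n. walk_prob P (k # xs @ [j]))"

lemma finite_Lst: "finite (Lst (j::'d::finite) n)"
proof -
  have "Lst j n = {xs. set xs \<subseteq> UNIV - {j} \<and> length xs = n}" unfolding Lst_def by auto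
  thus ?thesis using finite_lists_length_eq[of "UNIV - {j}" n] by simp
qed

lemma walk_prob_Cons2: "walk_prob P (a # b # ws) = P$a$b * walk_prob P (b # ws)"
  unfolding walk_prob_def by (simp del: prod.lessThan_Suc add: prod.lessThan_Suc_shift)

lemma walk_prob_two: "walk_prob P [a, b] = P$a$b"
  unfolding walk_prob_def by simp

lemma Lst_Suc: "Lst j (Suc n) = (\<lambda>(l,xs). l # xs) ` ((UNIV - {j}) \<times> Lst j n)"
  unfolding Lst_def by (auto simp: length_Suc_conv image_iff)

lemma Sw_0: "Sw P j 0 k = P$k$j"
proof -
  have "Lst j 0 = {[]}" unfolding Lst_def by auto
  thus ?thesis unfolding Sw_def by (simp add: walk_prob_two)
qed

lemma Sw_Suc: "Sw P (j::'d::finite) (Suc n) k = (\<Sum>l\<in>UNIV - {j}. P$k$l * Sw P j n l)"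
proof -
  have inj: "inj_on (\<lambda>(l,xs). l # xs) ((UNIV - {j}) \<times> Lst j n)"
    by (auto simp: inj_on_def)
  have "Sw P j (Suc n) k = (\<Sum>(l,xs)\<in>(UNIV - {j}) \<times> Lst j n. walk_prob P (k # (l # xs) @ [j]))"
    unfolding Sw_def Lst_Suc by (subst sum.reindex[OF inj]) (simp add: case_prod_unfold)
  also have "\<dots> = (\<Sum>l\<in>UNIV - {j}. \<Sum>xs\<in>Lst j n. P$k$l * walk_prob P (l # xs @ [j]))"
    by (subst sum.cartesian_product[symmetric]) (simp add: walk_prob_Cons2)
  also have "\<dots> = (\<Sum>l\<in>UNIV - {j}. P$k$l * Sw P j n l)"
    unfolding Sw_def by (simp add: sum_distrib_left)
  finally show ?thesis .
qed

context net begin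

lemma walk_prob_nonneg: "0 \<le> walk_prob P ws"
  unfolding walk_prob_def using P_nonneg by (auto intro: prod_nonneg)

lemma Sw_nonneg: "0 \<le> Sw P j n k"
  unfolding Sw_def using walk_prob_nonneg by (auto intro: sum_nonneg)

definition gq :: "'d \<Rightarrow> 'd \<Rightarrow> real" where "gq j k = G$k$j / G$j$j"

lemma gq_eq: "k \<noteq> j \<Longrightarrow> gq j k = P$k$j + (\<Sum>l\<in>UNIV - {j}. P$k$l * gq j l)"
proof -
  assume kj: "k \<noteq> j"
  have Gj: "0 < G$j$j" using G_diag[of j] by simp
  have "G$k$j = (\<Sum>l\<in>UNIV. P$k$l * G$l$j)" using kj by (subst G_eq1) simp
  also have "\<dots> = P$k$j * G$j$j + (\<Sum>l\<in>UNIV - {j}. P$k$l * G$l$j)"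
    by (simp add: sum.remove[of UNIV j])
  moreover have "(\<Sum>l\<in>UNIV - {j}. P$k$l * gq j l) = (\<Sum>l\<in>UNIV - {j}. P$k$l * G$l$j) / G$j$j"
    unfolding gq_def by (simp add: sum_divide_distrib)
  ultimately show ?thesis unfolding gq_def using Gj
    by (simp add: field_simps)
qed

lemma gq_nonneg: "0 \<le> gq j k"
  unfolding gq_def using G_nonneg G_diag[of j] by simp

lemma Sw_partial: "k \<noteq> j \<Longrightarrow> (\<Sum>n\<le>N. Sw P j n k) \<le> gq j k"
proof (induction N arbitrary: k)
  case 0
  then show ?case using gq_eq[of k j] P_nonneg gq_nonneg
    by (simp add: Sw_0 sum_nonneg)
next
  case (Suc N)
  have "(\<Sum>n\<le>Suc N. Sw P j n k) = P$k$j + (\<Sum>l\<in>UNIV - {j}. P$k$l * (\<Sum>n\<le>N. Sw P j n l))"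
    by (simp del: sum.atMost_Suc add: sum.atMost_Suc_shift Sw_0 Sw_Suc sum_distrib_left sum.swap[of _ "{..N}"])
  also have "\<dots> \<le> P$k$j + (\<Sum>l\<in>UNIV - {j}. P$k$l * gq j l)"
    using Suc.IH P_nonneg by (intro add_left_mono sum_mono mult_left_mono) auto
  also have "\<dots> = gq j k" using gq_eq[OF Suc.prems] by simp
  finally show ?case .
qed

lemma Sw_summable: "summable (\<lambda>n. Sw P j n k)"
proof (cases "k = j")
  case False
  show ?thesis by (rule bounded_imp_summable[OF Sw_nonneg Sw_partial[OF False]])
next
  case True
  have "Sw P j (Suc n) j = (\<Sum>l\<in>UNIV - {j}. P$j$l * Sw P j n l)" for n by (rule Sw_Suc)
  have s: "summable (\<lambda>n. \<Sum>l\<in>UNIV - {j}. P$j$l * Sw P j n l)"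
    by (intro summable_sum summable_mult bounded_imp_summable[OF Sw_nonneg Sw_partial]) auto
  hence "summable (\<lambda>n. Sw P j (Suc n) j)" by (simp add: Sw_Suc)
  thus ?thesis using True summable_Suc_iff by blast
qed

lemma Qhit_G: "Qhit P k j * G$j$j = G$k$j"
proof -
  define q where "q k = (if k = j then 0 else (\<Sum>n. Sw P j n k) - gq j k)" for k
  have qeq: "k \<noteq> j \<Longrightarrow> q k = (\<Sum>l\<in>UNIV. P$k$l * q l)" for k
  proof -
    assume False: "k \<noteq> j"
    have "(\<Sum>n. Sw P j n k) = Sw P j 0 k + (\<Sum>n. Sw P j (Suc n) k)"
      using suminf_split_head[OF Sw_summable[of j k]] by simp
    also have "(\<Sum>n. Sw P j (Suc n) k) = (\<Sum>l\<in>UNIV - {j}. P$k$l * (\<Sum>n. Sw P j n l))"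
      by (simp add: Sw_Suc suminf_sum summable_mult Sw_summable suminf_mult)
    finally have "(\<Sum>n. Sw P j n k) - gq j k = (\<Sum>l\<in>UNIV - {j}. P$k$l * ((\<Sum>n. Sw P j n l) - gq j l))"
      using gq_eq[OF False] by (simp add: Sw_0 right_diff_distrib sum_subtractf)
    also have "\<dots> = (\<Sum>l\<in>UNIV. P$k$l * q l)"
      by (auto simp: q_def sum.remove[of UNIV j] intro!: sum.cong)
    finally show ?thesis using False by (simp add: q_def)
  qed
  have "\<bar>q k\<bar> = 0" for k
  proof (rule subharm_zero[of "\<lambda>k. \<bar>q k\<bar>"])
    fix k
    have "0 \<le> (\<Sum>l\<in>UNIV. P$k$l * \<bar>q l\<bar>)" using P_nonneg by (auto intro: sum_nonneg)
    moreover have "\<bar>q k\<bar> \<le> (\<Sum>l\<in>UNIV. P$k$l * \<bar>q l\<bar>)" if "k \<noteq> j"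
      apply (subst qeq[OF that])
      apply (rule order.trans[OF sum_abs])
      using P_nonneg by (simp add: abs_mult)
    ultimately show "\<bar>q k\<bar> \<le> (\<Sum>l\<in>UNIV. P$k$l * \<bar>q l\<bar>)"
      by (cases "k = j") (auto simp: q_def)
  qed simp
  hence "k \<noteq> j \<Longrightarrow> Qhit P k j = gq j k" for k
  proof -
    assume a: "\<And>k. \<bar>q k\<bar> = 0" and b: "k \<noteq> j"
    have "q k = 0" using a[of k] by simp
    hence "(\<Sum>n. Sw P j n k) = gq j k" using b by (simp add: q_def)
    thus ?thesis using \<open>k \<noteq> j\<close> by (simp add: Qhit_def Sw_def Lst_def)
  qed
  thus ?thesis using G_diag[of j] by (cases "k = j") (auto simp: Qhit_def gq_def)
qed

end


abbreviation ee :: "'d::finite \<Rightarrow> int^'d" where "ee i \<equiv> axis i 1"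

lemma ee_nth: "ee i $ k = (if k = i then 1 else 0)"
  by (simp add: axis_def)

lemma sum_swap3: "(\<Sum>z\<in>A. \<Sum>i\<in>B. \<Sum>j\<in>C. f z i j) = (\<Sum>i\<in>B. \<Sum>j\<in>C. \<Sum>z\<in>A. f z i j)"
proof -
  have "(\<Sum>z\<in>A. \<Sum>i\<in>B. \<Sum>j\<in>C. f z i j) = (\<Sum>i\<in>B. \<Sum>z\<in>A. \<Sum>j\<in>C. f z i j)"
    by (rule sum.swap)
  also have "\<dots> = (\<Sum>i\<in>B. \<Sum>j\<in>C. \<Sum>z\<in>A. f z i j)"
    by (rule sum.cong[OF refl], rule sum.swap)
  finally show ?thesis .
qed

lemma jgen_formula:
  fixes y :: "int^'d::finite"
  assumes y: "y \<in> nonneg_lattice"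
  shows "jgen lam mu P f y =
     (\<Sum>i\<in>UNIV. lam$i * (f (y + ee i) - f y))
   + (\<Sum>i\<in>UNIV. if 0 < y$i then mu$i * exit_prob P i * (f (y - ee i) - f y) else 0)
   + (\<Sum>i\<in>UNIV. \<Sum>j\<in>UNIV. if j \<noteq> i \<and> 0 < y$i then mu$i * P$i$j * (f (y + ee j - ee i) - f y) else 0)"
proof -
  define M where "M = range (\<lambda>i. y + ee i) \<union> range (\<lambda>i. y - ee i) \<union> range (\<lambda>(i,j). y + ee j - ee i)"
  define LM where "LM = nonneg_lattice \<inter> M"
  have finM: "finite LM" unfolding LM_def M_def by auto
  define d where "d z = f z - f y" for z
  have sub: "{z\<in>nonneg_lattice. jrate lam mu P (z - y) \<noteq> 0} \<subseteq> LM"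
  proof
    fix z assume z: "z \<in> {z\<in>nonneg_lattice. jrate lam mu P (z - y) \<noteq> 0}"
    show "z \<in> LM"
    proof (rule ccontr)
      assume "z \<notin> LM"
      hence "z \<notin> M" using z unfolding LM_def by auto
      have "z - y \<noteq> ee i" for i
      proof
        assume "z - y = ee i" hence "z = y + ee i" by (simp add: algebra_simps)
        thus False using \<open>z \<notin> M\<close> unfolding M_def by auto
      qed
      moreover have "z - y \<noteq> - ee i" for i
      proof
        assume "z - y = - ee i" hence "z = y - ee i" by (simp add: algebra_simps)
        thus False using \<open>z \<notin> M\<close> unfolding M_def by auto
      qed
      moreover have "z - y \<noteq> ee j - ee i" for i j
      proof
        assume "z - y = ee j - ee i" hence "z = y + ee j - ee i" by (simp add: algebra_simps)
        hence "z \<in> range (\<lambda>(i,j). y + ee j - ee i)" by (auto simp: image_iff)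
        thus False using \<open>z \<notin> M\<close> unfolding M_def by auto
      qed
      ultimately have "jrate lam mu P (z - y) = 0" unfolding jrate_def by simp
      thus False using z by simp
    qed
  qed
  have "jgen lam mu P f y = (\<Sum>z\<in>LM. jrate lam mu P (z - y) * d z)"
    unfolding jgen_def d_def
    by (rule sum.mono_neutral_left[OF finM sub]) (auto simp: LM_def)
  also have "\<dots> = (\<Sum>z\<in>LM. (\<Sum>i\<in>UNIV. if z = y + ee i then lam$i * d z else 0))
     + (\<Sum>z\<in>LM. (\<Sum>i\<in>UNIV. if z = y - ee i then mu$i * exit_prob P i * d z else 0))
     + (\<Sum>z\<in>LM. (\<Sum>i\<in>UNIV. \<Sum>j\<in>UNIV. if j \<noteq> i \<and> z = y + ee j - ee i then mu$i * P$i$j * d z else 0))"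
  proof -
    have e: "(z - y = a) = (z = y + a)" for a z y :: "int^'d" by (auto simp: algebra_simps)
    have e2: "(z - y = - a) = (z = y - a)" for a z y :: "int^'d" by (auto simp: algebra_simps)
    have e3: "(z - y = b - a) = (z = y + b - a)" for a b z y :: "int^'d" by (auto simp: algebra_simps)
    have "jrate lam mu P (z - y) * d z = (\<Sum>i\<in>UNIV. if z = y + ee i then lam$i * d z else 0)
     + (\<Sum>i\<in>UNIV. if z = y - ee i then mu$i * exit_prob P i * d z else 0)
     + (\<Sum>i\<in>UNIV. \<Sum>j\<in>UNIV. if j \<noteq> i \<and> z = y + ee j - ee i then mu$i * P$i$j * d z else 0)" for z
      unfolding jrate_def distrib_right sum_distrib_right
      by (intro arg_cong2[where f="(+)"] sum.cong refl) (auto simp: e e2 e3)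
    thus ?thesis by (simp add: sum.distrib)
  qed
  also have "\<dots> = (\<Sum>i\<in>UNIV. if y + ee i \<in> LM then lam$i * d (y + ee i) else 0)
     + (\<Sum>i\<in>UNIV. if y - ee i \<in> LM then mu$i * exit_prob P i * d (y - ee i) else 0)
     + (\<Sum>i\<in>UNIV. \<Sum>j\<in>UNIV. if j \<noteq> i \<and> y + ee j - ee i \<in> LM then mu$i * P$i$j * d (y + ee j - ee i) else 0)"
  proof -
    have 1: "(\<Sum>z\<in>LM. (\<Sum>i\<in>UNIV. if z = y + ee i then lam$i * d z else 0))
      = (\<Sum>i\<in>UNIV. if y + ee i \<in> LM then lam$i * d (y + ee i) else 0)"
      by (subst sum.swap) (simp add: sum.delta[OF finM])
    have 2: "(\<Sum>z\<in>LM. (\<Sum>i\<in>UNIV. if z = y - ee i then mu$i * exit_prob P i * d z else 0))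
      = (\<Sum>i\<in>UNIV. if y - ee i \<in> LM then mu$i * exit_prob P i * d (y - ee i) else 0)"
      by (subst sum.swap) (simp add: sum.delta[OF finM])
    have 3: "(\<Sum>z\<in>LM. (\<Sum>i\<in>UNIV. \<Sum>j\<in>UNIV. if j \<noteq> i \<and> z = y + ee j - ee i then mu$i * P$i$j * d z else 0))
      = (\<Sum>i\<in>UNIV. \<Sum>j\<in>UNIV. if j \<noteq> i \<and> y + ee j - ee i \<in> LM then mu$i * P$i$j * d (y + ee j - ee i) else 0)"
    proof -
      have "(\<Sum>z\<in>LM. if j \<noteq> i \<and> z = y + ee j - ee i then mu$i * P$i$j * d z else 0)
         = (if j \<noteq> i \<and> y + ee j - ee i \<in> LM then mu$i * P$i$j * d (y + ee j - ee i) else 0)" for i j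
        by (cases "j = i") (simp_all add: sum.delta[OF finM])
      thus ?thesis by (simp add: sum_swap3)
    qed
    show ?thesis using 1 2 3 by simp
  qed
  also have "\<dots> = (\<Sum>i\<in>UNIV. lam$i * (f (y + ee i) - f y))
   + (\<Sum>i\<in>UNIV. if 0 < y$i then mu$i * exit_prob P i * (f (y - ee i) - f y) else 0)
   + (\<Sum>i\<in>UNIV. \<Sum>j\<in>UNIV. if j \<noteq> i \<and> 0 < y$i then mu$i * P$i$j * (f (y + ee j - ee i) - f y) else 0)"
  proof -
    have yk: "0 \<le> y$k" for k using y by (simp add: nonneg_lattice_def)
    have m1: "y + ee i \<in> LM" for i
      unfolding LM_def M_def nonneg_lattice_def using yk by (auto simp: ee_nth)
    have m2: "(y - ee i \<in> LM) = (0 < y$i)" for i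
    proof
      assume "y - ee i \<in> LM"
      hence "0 \<le> (y - ee i)$i" unfolding LM_def nonneg_lattice_def by blast
      thus "0 < y$i" by (simp add: ee_nth)
    next
      assume "0 < y$i"
      thus "y - ee i \<in> LM" unfolding LM_def M_def nonneg_lattice_def using yk
        by (auto simp: ee_nth)
    qed
    have m3: "(y + ee j - ee i \<in> LM) = (0 < y$i)" if "j \<noteq> i" for i j
    proof
      assume "y + ee j - ee i \<in> LM"
      hence "0 \<le> (y + ee j - ee i)$i" unfolding LM_def nonneg_lattice_def by blast
      thus "0 < y$i" using that by (simp add: ee_nth)
    next
      assume "0 < y$i"
      moreover have "y + ee j - ee i \<in> M" unfolding M_def by (auto simp: image_iff)
      ultimately show "y + ee j - ee i \<in> LM" unfolding LM_def nonneg_lattice_def using yk that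
        by (auto simp: ee_nth)
    qed
    have t1: "(\<Sum>i\<in>UNIV. if y + ee i \<in> LM then lam$i * d (y + ee i) else 0) = (\<Sum>i\<in>UNIV. lam$i * (f (y + ee i) - f y))"
      using m1 by (simp add: d_def)
    have t2: "(\<Sum>i\<in>UNIV. if y - ee i \<in> LM then mu$i * exit_prob P i * d (y - ee i) else 0) = (\<Sum>i\<in>UNIV. if 0 < y$i then mu$i * exit_prob P i * (f (y - ee i) - f y) else 0)"
      using m2 unfolding d_def by (intro sum.cong refl) auto
    have t3: "(if j \<noteq> i \<and> y + ee j - ee i \<in> LM then mu$i * P$i$j * d (y + ee j - ee i) else 0)
       = (if j \<noteq> i \<and> 0 < y$i then mu$i * P$i$j * (f (y + ee j - ee i) - f y) else 0)" for i j
      using m3[of j i] by (cases "j = i") (simp_all add: d_def)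
    show ?thesis using t1 t2 t3 by simp
  qed
  finally show ?thesis .
qed



lemma prod_shift:
  fixes a :: "'d::finite \<Rightarrow> real"
  assumes "\<And>k. m k = n k + (if k = l then 1 else 0)"
  shows "(\<Prod>k\<in>UNIV. a k ^ m k) = (\<Prod>k\<in>UNIV. a k ^ n k) * a l"
proof -
  have "(\<Prod>k\<in>UNIV. a k ^ m k) = (\<Prod>k\<in>UNIV. a k ^ n k * (if k = l then a k else 1))"
    using assms by (intro prod.cong refl) (simp add: power_add)
  also have "\<dots> = (\<Prod>k\<in>UNIV. a k ^ n k) * (\<Prod>k\<in>UNIV. if k = l then a k else 1)"
    by (rule prod.distrib)
  finally show ?thesis by simp
qed

locale jn = net P \<rho> for P :: "real^'d^'d" and \<rho> :: "real^'d" +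
  fixes lam mu \<nu> :: "real^'d"
  assumes lam_nonneg: "\<forall>i. 0 \<le> lam$i"
    and mu_pos: "\<forall>i. 0 < mu$i"
    and traffic: "\<forall>j. \<nu>$j = lam$j + (\<Sum>i\<in>UNIV. \<nu>$i * P$i$j)"
begin

lemma nu_lamG: "\<nu>$i = (\<Sum>k\<in>UNIV. lam$k * G$k$i)"
proof -
  have PG: "(\<Sum>k\<in>UNIV. P$l$k * G$k$i) = G$l$i - (if l = i then 1 else 0)" for l
    by (subst (2) G_eq1) simp
  have "(\<Sum>k\<in>UNIV. lam$k * G$k$i) = (\<Sum>k\<in>UNIV. (\<nu>$k - (\<Sum>l\<in>UNIV. \<nu>$l * P$l$k)) * G$k$i)"
    using traffic by (intro sum.cong refl) (metis add_diff_cancel_right')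
  also have "\<dots> = (\<Sum>k\<in>UNIV. \<nu>$k * G$k$i) - (\<Sum>l\<in>UNIV. \<nu>$l * (\<Sum>k\<in>UNIV. P$l$k * G$k$i))"
  proof -
    have "(\<Sum>k\<in>UNIV. (\<Sum>l\<in>UNIV. \<nu>$l * P$l$k) * G$k$i) = (\<Sum>l\<in>UNIV. \<nu>$l * (\<Sum>k\<in>UNIV. P$l$k * G$k$i))"
      unfolding sum_distrib_left sum_distrib_right by (subst sum.swap) (simp add: mult.assoc)
    thus ?thesis by (simp add: left_diff_distrib sum_subtractf)
  qed
  also have "\<dots> = \<nu>$i"
    by (simp add: PG right_diff_distrib sum_subtractf if_distrib[where f="\<lambda>t. _ * t"] cong: if_cong)
  finally show ?thesis by simp
qed

lemma nu_nonneg: "0 \<le> \<nu>$i"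
  unfolding nu_lamG using lam_nonneg G_nonneg by (auto intro: sum_nonneg)

definition aa :: "real \<Rightarrow> 'd \<Rightarrow> 'd \<Rightarrow> real" where
  "aa eps k i = 1 + eps * G$k$i / \<rho>$i"

definition hh :: "real \<Rightarrow> 'd \<Rightarrow> int^'d \<Rightarrow> real" where
  "hh eps i x = (\<Prod>k\<in>UNIV. aa eps k i ^ nat (x$k))"

lemma hfun_hh: "hfun P eps \<rho> x = (\<Sum>i\<in>UNIV. hh eps i x)"
  unfolding hfun_def hh_def aa_def ..

lemma aa_ge1: "0 \<le> eps \<Longrightarrow> 1 \<le> aa eps k i"
  unfolding aa_def using G_nonneg rho_pos by (simp add: divide_nonneg_pos)

lemma aa_pos: "0 \<le> eps \<Longrightarrow> 0 < aa eps k i"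
  using aa_ge1[of eps k i] by linarith

lemma hh_pos: "0 \<le> eps \<Longrightarrow> 0 < hh eps i x"
  unfolding hh_def using aa_pos by (auto intro!: prod_pos zero_less_power)

lemma hh_plus:
  assumes z: "z \<in> nonneg_lattice"
  shows "hh eps i (z + ee l) = hh eps i z * aa eps l i"
  unfolding hh_def
proof (rule prod_shift)
  fix k
  have "0 \<le> z$k" using z by (simp add: nonneg_lattice_def)
  thus "nat ((z + ee l)$k) = nat (z$k) + (if k = l then 1 else 0)"
    by (simp add: ee_nth nat_add_distrib)
qed


lemma hh_minus:
  assumes y: "y \<in> nonneg_lattice" and yk: "0 < y$k"
  shows "y - ee k \<in> nonneg_lattice" "hh eps i y = hh eps i (y - ee k) * aa eps k i"
proof -
  show z: "y - ee k \<in> nonneg_lattice"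
    using y yk by (auto simp: nonneg_lattice_def ee_nth)
  show "hh eps i y = hh eps i (y - ee k) * aa eps k i"
    using hh_plus[OF z, of eps i k] by simp
qed

lemma Lh_formula:
  assumes y: "y \<in> nonneg_lattice" and eps: "0 < eps"
  shows "jgen lam mu P (hfun P eps \<rho>) y =
    (\<Sum>i\<in>UNIV. hh eps i y * (eps * \<nu>$i / \<rho>$i - (if 0 < y$i then eps * mu$i / (\<rho>$i + eps * G$i$i) else 0)))"
proof -
  let ?h = "hfun P eps \<rho>"
  have T1: "(\<Sum>k\<in>UNIV. lam$k * (?h (y + ee k) - ?h y)) = (\<Sum>i\<in>UNIV. hh eps i y * (eps * \<nu>$i / \<rho>$i))"
  proof -
    have "?h (y + ee k) - ?h y = (\<Sum>i\<in>UNIV. hh eps i y * (eps * G$k$i / \<rho>$i))" for k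
      unfolding hfun_hh hh_plus[OF y] by (simp add: aa_def sum_subtractf algebra_simps sum.distrib)
    hence "(\<Sum>k\<in>UNIV. lam$k * (?h (y + ee k) - ?h y)) = (\<Sum>k\<in>UNIV. \<Sum>i\<in>UNIV. lam$k * (hh eps i y * (eps * G$k$i / \<rho>$i)))"
      by (simp add: sum_distrib_left)
    also have "\<dots> = (\<Sum>i\<in>UNIV. \<Sum>k\<in>UNIV. lam$k * (hh eps i y * (eps * G$k$i / \<rho>$i)))"
      by (rule sum.swap)
    also have "\<dots> = (\<Sum>i\<in>UNIV. hh eps i y * (eps / \<rho>$i) * (\<Sum>k\<in>UNIV. lam$k * G$k$i))"
      by (simp add: sum_distrib_left mult_ac)
    finally show ?thesis by (simp add: nu_lamG[symmetric] mult.assoc)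
  qed
  have T23: "mu$k * exit_prob P k * (?h (y - ee k) - ?h y)
      + (\<Sum>j\<in>UNIV. if j \<noteq> k then mu$k * P$k$j * (?h (y + ee j - ee k) - ?h y) else 0)
      = - (hh eps k y * (eps * mu$k / (\<rho>$k + eps * G$k$k)))" if yk: "0 < y$k" for k
  proof -
    define z where "z = y - ee k"
    have z: "z \<in> nonneg_lattice" and hy: "\<And>i. hh eps i y = hh eps i z * aa eps k i"
      using hh_minus[OF y yk] unfolding z_def by auto
    have hz: "hh eps i (y + ee j - ee k) = hh eps i z * aa eps j i" for i j
    proof -
      have e: "y + ee j - ee k = z + ee j" unfolding z_def by (simp add: algebra_simps)
      show ?thesis unfolding e by (rule hh_plus[OF z])
    qed
    have br: "exit_prob P k * (1 - aa eps k i) + (\<Sum>j\<in>UNIV. P$k$j * (aa eps j i - aa eps k i))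
       = - (eps / \<rho>$i) * (if k = i then 1 else 0)" for i
    proof -
      have SG: "(\<Sum>j\<in>UNIV. P$k$j * G$j$i) = G$k$i - (if k = i then 1 else 0)"
        by (subst (2) G_eq1) simp
      have rp: "\<rho>$i \<noteq> 0" using rho_pos by (metis less_irrefl)
      have pa: "P$k$j * aa eps j i = P$k$j + (eps/\<rho>$i) * (P$k$j * G$j$i)" for j
        unfolding aa_def using rp by (simp add: field_simps)
      have s1: "(\<Sum>j\<in>UNIV. P$k$j * aa eps j i) = (\<Sum>j\<in>UNIV. P$k$j) + (eps/\<rho>$i) * (G$k$i - (if k = i then 1 else 0))"
      proof -
        have "(\<Sum>j\<in>UNIV. P$k$j * aa eps j i) = (\<Sum>j\<in>UNIV. P$k$j + (eps/\<rho>$i) * (P$k$j * G$j$i))"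
          by (intro sum.cong refl pa)
        also have "\<dots> = (\<Sum>j\<in>UNIV. P$k$j) + (eps/\<rho>$i) * (\<Sum>j\<in>UNIV. P$k$j * G$j$i)"
          by (simp only: sum.distrib sum_distrib_left)
        finally show ?thesis by (simp only: SG)
      qed
      have s2: "(\<Sum>j\<in>UNIV. P$k$j * (aa eps j i - aa eps k i)) = (\<Sum>j\<in>UNIV. P$k$j * aa eps j i) - (\<Sum>j\<in>UNIV. P$k$j) * aa eps k i"
        by (simp add: right_diff_distrib sum_subtractf sum_distrib_right)
      show ?thesis unfolding s2 s1 exit_prob_def using rp
        by (simp add: aa_def field_simps)
    qed
    have "mu$k * exit_prob P k * (?h (y - ee k) - ?h y)
      + (\<Sum>j\<in>UNIV. if j \<noteq> k then mu$k * P$k$j * (?h (y + ee j - ee k) - ?h y) else 0)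
      = mu$k * (exit_prob P k * (?h z - ?h y) + (\<Sum>j\<in>UNIV. P$k$j * (?h (y + ee j - ee k) - ?h y)))"
      using P_diag by (simp add: z_def sum_distrib_left distrib_left mult.assoc if_distrib[where f="\<lambda>t. t * _"]
          cong: if_cong) (auto intro!: sum.cong)
    also have "exit_prob P k * (?h z - ?h y) + (\<Sum>j\<in>UNIV. P$k$j * (?h (y + ee j - ee k) - ?h y))
      = (\<Sum>i\<in>UNIV. hh eps i z * (exit_prob P k * (1 - aa eps k i) + (\<Sum>j\<in>UNIV. P$k$j * (aa eps j i - aa eps k i))))"
    proof -
      have e1: "?h z - ?h y = (\<Sum>i\<in>UNIV. hh eps i z * (1 - aa eps k i))"
        unfolding hfun_hh hy by (simp add: sum_subtractf[symmetric] right_diff_distrib)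
      have e2: "?h (y + ee j - ee k) - ?h y = (\<Sum>i\<in>UNIV. hh eps i z * (aa eps j i - aa eps k i))" for j
        unfolding hfun_hh hy hz by (simp add: sum_subtractf[symmetric] right_diff_distrib)
      have "exit_prob P k * (?h z - ?h y) + (\<Sum>j\<in>UNIV. P$k$j * (?h (y + ee j - ee k) - ?h y))
        = (\<Sum>i\<in>UNIV. exit_prob P k * (hh eps i z * (1 - aa eps k i)))
          + (\<Sum>j\<in>UNIV. \<Sum>i\<in>UNIV. P$k$j * (hh eps i z * (aa eps j i - aa eps k i)))"
        unfolding e1 e2 by (simp only: sum_distrib_left)
      also have "(\<Sum>j\<in>UNIV. \<Sum>i\<in>UNIV. P$k$j * (hh eps i z * (aa eps j i - aa eps k i)))
         = (\<Sum>i\<in>UNIV. \<Sum>j\<in>UNIV. P$k$j * (hh eps i z * (aa eps j i - aa eps k i)))"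
        by (rule sum.swap)
      also have "(\<Sum>i\<in>UNIV. exit_prob P k * (hh eps i z * (1 - aa eps k i)))
          + (\<Sum>i\<in>UNIV. \<Sum>j\<in>UNIV. P$k$j * (hh eps i z * (aa eps j i - aa eps k i)))
        = (\<Sum>i\<in>UNIV. hh eps i z * (exit_prob P k * (1 - aa eps k i) + (\<Sum>j\<in>UNIV. P$k$j * (aa eps j i - aa eps k i))))"
        by (simp only: sum.distrib[symmetric] distrib_left sum_distrib_left mult.left_commute)
      finally show ?thesis .
    qed
    also have "\<dots> = - (hh eps k z * (eps / \<rho>$k))"
      unfolding br by (simp add: if_distrib[where f="\<lambda>t. _ * t"] cong: if_cong)
    also have "hh eps k z = hh eps k y / aa eps k k"
      using hy[of k] aa_pos[of eps k k] eps by simp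
    finally have X: "mu$k * exit_prob P k * (?h (y - ee k) - ?h y)
      + (\<Sum>j\<in>UNIV. if j \<noteq> k then mu$k * P$k$j * (?h (y + ee j - ee k) - ?h y) else 0)
      = mu$k * - (hh eps k y / aa eps k k * (eps / \<rho>$k))" .
    have rk: "0 < \<rho>$k" using rho_pos by simp
    have ak: "aa eps k k * \<rho>$k = \<rho>$k + eps * G$k$k" unfolding aa_def using rk by (simp add: field_simps)
    have "hh eps k y / aa eps k k * (eps / \<rho>$k) = hh eps k y * eps / (aa eps k k * \<rho>$k)"
      by simp
    also have "\<dots> = hh eps k y * (eps * mu$k / (\<rho>$k + eps * G$k$k)) / mu$k"
      using mu_pos[rule_format, of k] ak by (simp add: mult_ac)
    finally have Y: "hh eps k y / aa eps k k * (eps / \<rho>$k) = hh eps k y * (eps * mu$k / (\<rho>$k + eps * G$k$k)) / mu$k" .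
    show ?thesis unfolding X Y using mu_pos[rule_format, of k] by simp
  qed
  have T23': "(if 0 < y$k then mu$k * exit_prob P k * (?h (y - ee k) - ?h y) else 0)
     + (\<Sum>j\<in>UNIV. if j \<noteq> k \<and> 0 < y$k then mu$k * P$k$j * (?h (y + ee j - ee k) - ?h y) else 0)
     = (if 0 < y$k then - (hh eps k y * (eps * mu$k / (\<rho>$k + eps * G$k$k))) else 0)" for k
  proof (cases "0 < y$k")
    case True
    thus ?thesis using T23[OF True] by simp
  qed simp
  have "jgen lam mu P ?h y = (\<Sum>i\<in>UNIV. hh eps i y * (eps * \<nu>$i / \<rho>$i))
     + (\<Sum>k\<in>UNIV. (if 0 < y$k then mu$k * exit_prob P k * (?h (y - ee k) - ?h y) else 0)
     + (\<Sum>j\<in>UNIV. if j \<noteq> k \<and> 0 < y$k then mu$k * P$k$j * (?h (y + ee j - ee k) - ?h y) else 0))"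
    unfolding jgen_formula[OF y] T1 by (simp add: sum.distrib)
  also have "\<dots> = (\<Sum>i\<in>UNIV. hh eps i y * (eps * \<nu>$i / \<rho>$i))
     + (\<Sum>k\<in>UNIV. if 0 < y$k then - (hh eps k y * (eps * mu$k / (\<rho>$k + eps * G$k$k))) else 0)"
    unfolding T23' ..
  also have "\<dots> = (\<Sum>i\<in>UNIV. hh eps i y * (eps * \<nu>$i / \<rho>$i - (if 0 < y$i then eps * mu$i / (\<rho>$i + eps * G$i$i) else 0)))"
    by (simp add: sum.distrib[symmetric] right_diff_distrib) (rule sum.cong, auto)
  finally show ?thesis .
qed

end


lemma ev_lattice:
  "eventually P at_infty_lattice \<longleftrightarrow> (\<exists>N. \<forall>x\<in>nonneg_lattice. N \<le> (\<Sum>k\<in>UNIV. \<bar>x$k\<bar>) \<longrightarrow> P x)"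
  unfolding at_infty_lattice_def eventually_inf_principal eventually_filtercomap eventually_at_top_linorder
proof
  assume "\<exists>Q. (\<exists>N. \<forall>n\<ge>N. Q n) \<and> (\<forall>x. Q (\<Sum>k\<in>UNIV. \<bar>x $ k\<bar>) \<longrightarrow> x \<in> nonneg_lattice \<longrightarrow> P x)"
  then obtain Q N where "\<forall>n\<ge>N. Q n" "\<forall>x. Q (\<Sum>k\<in>UNIV. \<bar>x $ k\<bar>) \<longrightarrow> x \<in> nonneg_lattice \<longrightarrow> P x"
    by blast
  thus "\<exists>N. \<forall>x\<in>nonneg_lattice. N \<le> (\<Sum>k\<in>UNIV. \<bar>x$k\<bar>) \<longrightarrow> P x" by blast
next
  assume "\<exists>N. \<forall>x\<in>nonneg_lattice. N \<le> (\<Sum>k\<in>UNIV. \<bar>x$k\<bar>) \<longrightarrow> P x"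
  then obtain N where N: "\<forall>x\<in>nonneg_lattice. N \<le> (\<Sum>k\<in>UNIV. \<bar>x$k\<bar>) \<longrightarrow> P x" by blast
  show "\<exists>Q. (\<exists>N. \<forall>n\<ge>N. Q n) \<and> (\<forall>x. Q (\<Sum>k\<in>UNIV. \<bar>x $ k\<bar>) \<longrightarrow> x \<in> nonneg_lattice \<longrightarrow> P x)"
    by (rule exI[of _ "\<lambda>n. N \<le> n"]) (use N in auto)
qed

lemma gap_lemma:
  fixes g :: "'d::finite \<Rightarrow> real^'d"
  assumes G: "\<forall>v::real^'d. (\<forall>k. 0 \<le> v$k) \<and> v \<noteq> 0 \<and> v$i = 0 \<longrightarrow> g i \<bullet> v < Max (range (\<lambda>j. g j \<bullet> v))"
  shows "\<exists>\<delta>>0. \<forall>v. (\<forall>k. 0 \<le> v$k) \<and> v$i = 0 \<and> (\<Sum>k\<in>UNIV. v$k) = 1 \<longrightarrow> (\<exists>j. g i \<bullet> v + \<delta> \<le> g j \<bullet> v)"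
proof -
  define S where "S = {v::real^'d. (\<forall>k. 0 \<le> v$k) \<and> v$i = 0 \<and> (\<Sum>k\<in>UNIV. v$k) = 1}"
  define \<psi> where "\<psi> v = (\<Sum>j\<in>UNIV. max 0 (g j \<bullet> v - g i \<bullet> v))" for v :: "real^'d"
  show ?thesis
  proof (cases "S = {}")
    case True
    thus ?thesis unfolding S_def by (intro exI[of _ 1]) auto
  next
    case False
    have cl: "closed S" unfolding S_def
      by (intro closed_Collect_conj closed_Collect_all closed_Collect_le closed_Collect_eq
          continuous_intros)
    have bd: "bounded S"
    proof -
      have "norm v \<le> 1" if "v \<in> S" for v :: "real^'d"
      proof -
        have "norm v \<le> (\<Sum>k\<in>UNIV. \<bar>v$k\<bar>)" by (rule norm_le_l1_cart)
        also have "\<dots> = (\<Sum>k\<in>UNIV. v$k)" using that unfolding S_def by simp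
        finally show ?thesis using that unfolding S_def by simp
      qed
      thus ?thesis unfolding bounded_iff by blast
    qed
    have cpt: "compact S" using cl bd by (simp add: compact_eq_bounded_closed)
    have cont: "continuous_on S \<psi>" unfolding \<psi>_def by (intro continuous_intros)
    obtain v0 where v0: "v0 \<in> S" and min: "\<And>v. v \<in> S \<Longrightarrow> \<psi> v0 \<le> \<psi> v"
      using continuous_attains_inf[OF cpt False cont] by blast
    have pos: "0 < \<psi> v" if vS: "v \<in> S" for v :: "real^'d"
    proof -
      have "v \<noteq> 0" using vS unfolding S_def by auto
      hence lt: "g i \<bullet> v < Max (range (\<lambda>j. g j \<bullet> v))" using G vS unfolding S_def by blast
      obtain j where "Max (range (\<lambda>j. g j \<bullet> v)) = g j \<bullet> v"
      proof -
        have "Max (range (\<lambda>j. g j \<bullet> v)) \<in> range (\<lambda>j. g j \<bullet> v)"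
          by (rule Max_in) auto
        thus ?thesis using that by blast
      qed
      hence j: "0 < max 0 (g j \<bullet> v - g i \<bullet> v)" using lt by simp
      show ?thesis unfolding \<psi>_def
        by (rule sum_pos2[of UNIV j]) (use j in auto)
    qed
    define \<delta> where "\<delta> = \<psi> v0 / real CARD('d)"
    have dpos: "0 < \<delta>" unfolding \<delta>_def using pos[OF v0] by simp
    show ?thesis
    proof (intro exI[of _ \<delta>] conjI allI impI dpos)
      fix v :: "real^'d" assume "(\<forall>k. 0 \<le> v$k) \<and> v$i = 0 \<and> (\<Sum>k\<in>UNIV. v$k) = 1"
      hence vS: "v \<in> S" unfolding S_def by blast
      show "\<exists>j. g i \<bullet> v + \<delta> \<le> g j \<bullet> v"
      proof (rule ccontr)
        assume nt: "\<not> ?thesis"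
        hence "max 0 (g j \<bullet> v - g i \<bullet> v) < \<delta>" for j
        proof -
          have "g j \<bullet> v < g i \<bullet> v + \<delta>" using nt by (simp add: not_le)
          thus ?thesis using dpos by simp
        qed
        note lt = this
        have "\<psi> v < (\<Sum>j\<in>(UNIV::'d set). \<delta>)" unfolding \<psi>_def
          apply (rule sum_strict_mono_ex1) using lt by (auto intro: less_imp_le)
        also have "\<dots> = \<psi> v0" unfolding \<delta>_def by simp
        finally show False using min[OF vS] by simp
      qed
    qed
  qed
qed

context jn begin

definition rv :: "int^'d \<Rightarrow> real^'d" where "rv y = (\<chi> k. real_of_int (y$k))"

lemma gvec_aa:
  assumes "0 \<le> eps"
  shows "gvec P (\<chi> i. eps * G$i$i / \<rho>$i) i = (\<chi> k. ln (aa eps k i))"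
proof -
  have fact: "Qhit P k i * (eps * G$i$i / \<rho>$i) = eps * G$k$i / \<rho>$i" for k
    using Qhit_G[of k i] by (metis (no_types, lifting) mult.left_commute times_divide_eq_right)
  have "gvec P (\<chi> i. eps * G$i$i / \<rho>$i) i $ k = ln (aa eps k i)" for k
    unfolding gvec_def aa_def by (simp only: vec_lambda_beta fact)
  thus ?thesis by (simp add: vec_eq_iff)
qed

lemma hh_exp:
  assumes y: "y \<in> nonneg_lattice" and eps: "0 \<le> eps"
  shows "hh eps i y = exp (gvec P (\<chi> i. eps * G$i$i / \<rho>$i) i \<bullet> rv y)"
proof -
  have "hh eps i y = (\<Prod>k\<in>UNIV. exp (ln (aa eps k i) * real_of_int (y$k)))"
    unfolding hh_def
  proof (rule prod.cong[OF refl])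
    fix k
    have "0 \<le> y$k" using y by (simp add: nonneg_lattice_def)
    hence "real_of_int (y$k) = real (nat (y$k))" by simp
    have "aa eps k i ^ nat (y$k) = exp (ln (aa eps k i)) ^ nat (y$k)"
      by (simp only: exp_ln[OF aa_pos[OF eps]])
    also have "\<dots> = exp (real (nat (y$k)) * ln (aa eps k i))"
      by (rule exp_of_nat_mult[symmetric])
    finally show "aa eps k i ^ nat (y$k) = exp (ln (aa eps k i) * real_of_int (y$k))"
      using \<open>real_of_int (y$k) = real (nat (y$k))\<close> by (simp only: mult.commute)
  qed
  also have "\<dots> = exp (\<Sum>k\<in>UNIV. ln (aa eps k i) * real_of_int (y$k))"
    by (simp add: exp_sum)
  finally show ?thesis unfolding gvec_aa[OF eps] rv_def inner_vec_def by simp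
qed

end

locale jne = jn P \<rho> lam mu \<nu> for P :: "real^'d^'d" and \<rho> lam mu \<nu> :: "real^'d" +
  fixes eps :: real
  assumes eps_pos: "0 < eps"
    and gam: "(\<chi> i. eps * Gmat P $i$i / \<rho>$i) \<in> Gamma_set P"
    and cneg: "\<forall>i. eps * \<nu>$i / \<rho>$i < eps * mu$i / (\<rho>$i + eps * Gmat P $i$i)"
begin

abbreviation "gg \<equiv> gvec P (\<chi> i. eps * G$i$i / \<rho>$i)"
definition "cc i = eps * \<nu>$i / \<rho>$i - eps * mu$i / (\<rho>$i + eps * G$i$i)"
definition "KK i = eps * mu$i / (\<rho>$i + eps * G$i$i)"
definition "HH y = (\<Sum>i\<in>UNIV. hh eps i y)"
definition "fL y = jgen lam mu P (hfun P eps \<rho>) y / hfun P eps \<rho> y"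

lemma HH_pos: "0 < HH y"
  unfolding HH_def using hh_pos eps_pos by (intro sum_pos) auto

lemma hh_le_HH: "hh eps i y \<le> HH y"
  unfolding HH_def using hh_pos eps_pos by (intro member_le_sum) (auto intro: less_imp_le)

lemma fL_eq:
  assumes y: "y \<in> nonneg_lattice"
  shows "fL y = (\<Sum>i\<in>UNIV. (hh eps i y / HH y) * (cc i + (if 0 < y$i then 0 else KK i)))"
proof -
  have "fL y = (\<Sum>i\<in>UNIV. hh eps i y * (eps * \<nu>$i / \<rho>$i - (if 0 < y$i then eps * mu$i / (\<rho>$i + eps * G$i$i) else 0))) / HH y"
    unfolding fL_def Lh_formula[OF y eps_pos] hfun_hh HH_def ..
  also have "\<dots> = (\<Sum>i\<in>UNIV. (hh eps i y / HH y) * (cc i + (if 0 < y$i then 0 else KK i)))"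
    unfolding sum_divide_distrib cc_def KK_def by (intro sum.cong refl) auto
  finally show ?thesis .
qed

lemma Gam_prop: "\<forall>v::real^'d. (\<forall>k. 0 \<le> v$k) \<and> v \<noteq> 0 \<and> v$i = 0 \<longrightarrow> gg i \<bullet> v < Max (range (\<lambda>j. gg j \<bullet> v))"
  using gam unfolding Gamma_set_def by blast

lemma weight_bound:
  assumes y: "y \<in> nonneg_lattice" and yi: "y$i = 0" and n: "0 < (\<Sum>k\<in>UNIV. \<bar>y$k\<bar>)"
    and d: "\<forall>v. (\<forall>k. 0 \<le> v$k) \<and> v$i = 0 \<and> (\<Sum>k\<in>UNIV. v$k) = 1 \<longrightarrow> (\<exists>j. gg i \<bullet> v + \<delta> \<le> gg j \<bullet> v)"
  shows "hh eps i y \<le> exp (- \<delta> * of_int (\<Sum>k\<in>UNIV. \<bar>y$k\<bar>)) * HH y"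
proof -
  define n where "n = real_of_int (\<Sum>k\<in>UNIV. \<bar>y$k\<bar>)"
  have npos: "0 < n" unfolding n_def using n by (metis of_int_0_less_iff)
  have yk: "0 \<le> y$k" for k using y by (simp add: nonneg_lattice_def)
  have nsum: "n = (\<Sum>k\<in>UNIV. rv y $ k)" unfolding n_def rv_def using yk by simp
  define v where "v = (1 / n) *\<^sub>R rv y"
  have "(\<forall>k. 0 \<le> v$k) \<and> v$i = 0 \<and> (\<Sum>k\<in>UNIV. v$k) = 1"
    unfolding v_def using yk yi npos nsum
    by (auto simp: rv_def sum_divide_distrib[symmetric])
  then obtain j where j: "gg i \<bullet> v + \<delta> \<le> gg j \<bullet> v" using d by blast
  have "gg i \<bullet> rv y + \<delta> * n \<le> gg j \<bullet> rv y"
  proof -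
    have "n * (gg i \<bullet> v + \<delta>) \<le> n * (gg j \<bullet> v)" using j npos by simp
    thus ?thesis unfolding v_def using npos by (simp add: inner_scaleR_right algebra_simps)
  qed
  hence "hh eps i y \<le> exp (gg j \<bullet> rv y - \<delta> * n)"
    unfolding hh_exp[OF y less_imp_le[OF eps_pos]] by simp
  also have "\<dots> = exp (- \<delta> * n) * hh eps j y"
    unfolding hh_exp[OF y less_imp_le[OF eps_pos]] by (simp add: exp_add[symmetric])
  also have "\<dots> \<le> exp (- \<delta> * n) * HH y"
    by (intro mult_left_mono hh_le_HH) auto
  finally show ?thesis unfolding n_def .
qed

definition "Mx = Max (range cc)"

lemma cc_neg: "cc i < 0" unfolding cc_def using cneg by simp

lemma Mx_in: "\<exists>i. cc i = Mx"
proof -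
  have "Mx \<in> range cc" unfolding Mx_def by (rule Max_in) auto
  thus ?thesis by auto
qed

lemma cc_le_Mx: "cc i \<le> Mx" unfolding Mx_def by (rule Max_ge) auto

lemma Mx_neg: "Mx < 0" using Mx_in cc_neg by metis

lemma KK_pos: "0 < KK i"
  unfolding KK_def using eps_pos mu_pos rho_pos G_nonneg[of i i]
  by (intro divide_pos_pos mult_pos_pos add_pos_nonneg mult_nonneg_nonneg) auto

lemma w_sum: "(\<Sum>i\<in>UNIV. hh eps i y / HH y) = 1"
  using HH_pos[of y] unfolding sum_divide_distrib[symmetric] HH_def by simp

lemma w_nonneg: "0 \<le> hh eps i y / HH y"
  using HH_pos[of y] hh_pos[of eps i y] eps_pos by simp

lemma w_le1: "hh eps i y / HH y \<le> 1"
  using HH_pos[of y] hh_le_HH[of i y] by simp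

lemma limsup_upper: "Limsup at_infty_lattice (\<lambda>x. ereal (fL x)) \<le> ereal Mx"
proof -
  have "\<forall>i. \<exists>\<delta>>0. \<forall>v. (\<forall>k. 0 \<le> v$k) \<and> v$i = 0 \<and> (\<Sum>k\<in>UNIV. v$k) = 1 \<longrightarrow> (\<exists>j. gg i \<bullet> v + \<delta> \<le> gg j \<bullet> v)"
    using gap_lemma[OF Gam_prop] by blast
  from choice[OF this] obtain \<delta> where dd: "\<forall>i. 0 < \<delta> i \<and> (\<forall>v. (\<forall>k. 0 \<le> v$k) \<and> v$i = 0 \<and> (\<Sum>k\<in>UNIV. v$k) = 1 \<longrightarrow> (\<exists>j. gg i \<bullet> v + \<delta> i \<le> gg j \<bullet> v))"
    by blast
  have d: "\<And>i. 0 < \<delta> i" using dd by blast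
  have dv: "\<And>i. \<forall>v. (\<forall>k. 0 \<le> v$k) \<and> v$i = 0 \<and> (\<Sum>k\<in>UNIV. v$k) = 1 \<longrightarrow> (\<exists>j. gg i \<bullet> v + \<delta> i \<le> gg j \<bullet> v)"
    using dd by blast
  define dm where "dm = Min (range \<delta>)"
  have dmpos: "0 < dm" unfolding dm_def using d by (subst Min_gr_iff) auto
  have dmle: "dm \<le> \<delta> i" for i unfolding dm_def by (rule Min_le) auto
  define Ks where "Ks = (\<Sum>i\<in>UNIV. KK i)"
  have Kspos: "0 \<le> Ks" unfolding Ks_def using KK_pos by (intro sum_nonneg) (auto intro: less_imp_le)
  show ?thesis
  proof (rule ereal_le_epsilon2)
    fix e :: real assume e: "0 < e"
    define N :: int where "N = ceiling (Ks / (dm * e)) + 1"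
    have ev: "eventually (\<lambda>x. ereal (fL x) \<le> ereal Mx + ereal e) at_infty_lattice"
      unfolding ev_lattice
    proof (intro exI[of _ N] ballI impI)
      fix y :: "int^'d" assume y: "y \<in> nonneg_lattice" and Ny: "N \<le> (\<Sum>k\<in>UNIV. \<bar>y$k\<bar>)"
      define n where "n = real_of_int (\<Sum>k\<in>UNIV. \<bar>y$k\<bar>)"
      have nN: "real_of_int N \<le> n" unfolding n_def using Ny by linarith
      have n1: "Ks / (dm * e) + 1 \<le> n" using nN unfolding N_def by linarith
      have npos: "0 < (\<Sum>k\<in>UNIV. \<bar>y$k\<bar>)"
      proof -
        have "0 \<le> Ks / (dm * e)" using Kspos dmpos e by simp
        hence "1 \<le> n" using n1 by linarith
        thus ?thesis unfolding n_def by linarith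
      qed
      have yk: "0 \<le> y$k" for k using y by (simp add: nonneg_lattice_def)
      have E: "hh eps i y / HH y * (if 0 < y$i then 0 else KK i) \<le> exp (- dm * n) * KK i" for i
      proof (cases "0 < y$i")
        case True thus ?thesis using KK_pos[of i] by simp
      next
        case False
        hence yi: "y$i = 0" using yk[of i] by simp
        have "hh eps i y \<le> exp (- \<delta> i * n) * HH y"
          using weight_bound[OF y yi npos dv[of i]] unfolding n_def .
        also have "\<dots> \<le> exp (- dm * n) * HH y"
          using dmle[of i] npos unfolding n_def
          by (intro mult_right_mono less_imp_le[OF HH_pos]) (simp add: mult_right_mono)
        finally have "hh eps i y / HH y \<le> exp (- dm * n)"
          using HH_pos[of y] by (simp add: divide_le_eq)
        hence "hh eps i y / HH y * KK i \<le> exp (- dm * n) * KK i"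
          using KK_pos[of i] by (intro mult_right_mono) auto
        thus ?thesis using False by simp
      qed
      have "fL y = (\<Sum>i\<in>UNIV. hh eps i y / HH y * cc i) + (\<Sum>i\<in>UNIV. hh eps i y / HH y * (if 0 < y$i then 0 else KK i))"
        unfolding fL_eq[OF y] by (simp add: distrib_left sum.distrib)
      also have "\<dots> \<le> (\<Sum>i\<in>UNIV. hh eps i y / HH y * Mx) + (\<Sum>i\<in>UNIV. exp (- dm * n) * KK i)"
        by (intro add_mono sum_mono mult_left_mono cc_le_Mx w_nonneg E)
      also have "(\<Sum>i\<in>UNIV. hh eps i y / HH y * Mx) = Mx"
        using w_sum[of y] by (simp only: sum_distrib_right[symmetric])
      also have "(\<Sum>i\<in>UNIV. exp (- dm * n) * KK i) = exp (- dm * n) * Ks"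
        unfolding Ks_def by (simp add: sum_distrib_left)
      also have "exp (- dm * n) * Ks \<le> e"
      proof -
        have "Ks \<le> e * (dm * n)"
        proof -
          have "Ks / (dm * e) \<le> n" using n1 by linarith
          thus ?thesis using dmpos e by (simp add: divide_le_eq mult_ac)
        qed
        also have "\<dots> \<le> e * exp (dm * n)"
          using e by (intro mult_left_mono) (auto intro: order.trans[OF _ exp_ge_add_one_self])
        finally have "Ks \<le> e * exp (dm * n)" .
        hence "exp (- dm * n) * Ks \<le> exp (- dm * n) * (e * exp (dm * n))"
          by (intro mult_left_mono) auto
        also have "\<dots> = e" by (simp add: exp_minus field_simps)
        finally show ?thesis .
      qed
      finally show "ereal (fL y) \<le> ereal Mx + ereal e" by simp
    qed
    show "Limsup at_infty_lattice (\<lambda>x. ereal (fL x)) \<le> ereal Mx + ereal e"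
      by (rule Limsup_bounded[OF ev])
  qed
qed

end


context jne begin

lemma limsup_lower: "ereal Mx \<le> Limsup at_infty_lattice (\<lambda>x. ereal (fL x))"
  unfolding Limsup_def
proof (rule INF_greatest)
  fix Q :: "int^'d \<Rightarrow> bool" assume "Q \<in> {Q. eventually Q at_infty_lattice}"
  then obtain N where N: "\<forall>x\<in>nonneg_lattice. N \<le> (\<Sum>k\<in>UNIV. \<bar>x$k\<bar>) \<longrightarrow> Q x"
    unfolding ev_lattice by blast
  obtain i0 where i0: "cc i0 = Mx" using Mx_in by blast
  define m where "m = max N 1"
  define y :: "int^'d" where "y = (\<chi> k. if k = i0 then m else 0)"
  have m1: "1 \<le> m" unfolding m_def by simp
  have y: "y \<in> nonneg_lattice" unfolding y_def nonneg_lattice_def using m1 by auto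
  have sy: "(\<Sum>k\<in>UNIV. \<bar>y$k\<bar>) = m"
  proof -
    have "(\<Sum>k\<in>UNIV. \<bar>y$k\<bar>) = (\<Sum>k\<in>UNIV. if k = i0 then m else 0)"
      unfolding y_def using m1 by (intro sum.cong refl) auto
    thus ?thesis by simp
  qed
  have Qy: "Q y" using N y sy unfolding m_def by auto
  have "fL y \<ge> Mx"
  proof -
    have trm: "hh eps i y / HH y * (cc i + (if 0 < y$i then 0 else KK i))
        \<ge> (if i = i0 then hh eps i y / HH y * Mx else 0)" for i
    proof (cases "i = i0")
      case True
      thus ?thesis using m1 i0 unfolding y_def by simp
    next
      case False
      hence "cc i + (if 0 < y$i then 0 else KK i) = eps * \<nu>$i / \<rho>$i"
        unfolding y_def cc_def KK_def by simp
      moreover have "0 \<le> eps * \<nu>$i / \<rho>$i"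
        using eps_pos nu_nonneg[of i] rho_pos[rule_format, of i]
        by (intro divide_nonneg_pos mult_nonneg_nonneg) auto
      ultimately show ?thesis using False w_nonneg[of i y] by (simp del: times_divide_eq_left times_divide_eq_right divide_divide_eq_left)
    qed
    have "(1 - hh eps i0 y / HH y) * Mx \<le> 0"
      using Mx_neg w_le1[of i0 y] by (intro mult_nonneg_nonpos) auto
    hence "Mx \<le> hh eps i0 y / HH y * Mx" by (simp add: left_diff_distrib)
    also have "\<dots> = (\<Sum>i\<in>UNIV. if i = i0 then hh eps i y / HH y * Mx else 0)" by simp
    also have "\<dots> \<le> fL y" unfolding fL_eq[OF y] by (rule sum_mono[OF trm])
    finally show ?thesis .
  qed
  hence "ereal Mx \<le> ereal (fL y)" by simp
  also have "\<dots> \<le> (SUP x\<in>{x. Q x}. ereal (fL x))" using Qy by (intro SUP_upper) auto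
  finally show "ereal Mx \<le> (SUP x\<in>{x. Q x}. ereal (fL x))" .
qed

lemma limsup_eq: "Limsup at_infty_lattice (\<lambda>x. ereal (fL x)) = ereal Mx"
  using limsup_lower limsup_upper by (rule antisym[rotated])

end


lemma log_chord:
  fixes t x0 :: real
  assumes "0 \<le> t" "t \<le> x0" "0 < x0"
  shows "t / x0 * ln (1 + x0) \<le> ln (1 + t)"
proof -
  define s where "s = t / x0"
  have s0: "0 \<le> s" "s \<le> 1" unfolding s_def using assms by (auto simp: divide_le_eq)
  have A: "(1 - s) * ln 1 + s * ln (1 + x0) \<le> ln ((1 - s) *\<^sub>R 1 + s *\<^sub>R (1 + x0))"
    by (rule concave_onD[OF ln_concave s0]) (use assms in auto)
  have eq: "(1 - s) *\<^sub>R 1 + s *\<^sub>R (1 + x0) = 1 + t"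
    unfolding s_def using assms by (simp add: field_simps)
  have "s * ln (1 + x0) \<le> ln (1 + t)" using A unfolding eq by simp
  thus ?thesis unfolding s_def .
qed

lemma ereal_lt_mult:
  fixes a e :: real and X :: ereal
  assumes "0 < a" "ereal e < ereal a * X"
  shows "ereal (e / a) < X"
  using assms
proof (cases X)
  case (real r)
  hence "e < a * r" using assms by simp
  thus ?thesis using real assms by (simp add: divide_less_eq mult.commute)
qed (use assms in auto)

context jn begin

lemma Rcal_props: "0 \<le> Rcal P \<rho>" "(\<Sum>j\<in>UNIV. \<rho>$j * P$j$i) \<le> Rcal P \<rho> * \<rho>$i"
proof -
  have le: "(\<Sum>j\<in>UNIV. \<rho>$j * P$j$i) / \<rho>$i \<le> Rcal P \<rho>" for i
    unfolding Rcal_def by (rule Max_ge) auto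
  have nn: "0 \<le> (\<Sum>j\<in>UNIV. \<rho>$j * P$j$i) / \<rho>$i" for i
    using rho_pos P_nonneg by (intro divide_nonneg_pos sum_nonneg mult_nonneg_nonneg) (auto intro: less_imp_le)
  show "0 \<le> Rcal P \<rho>" using le[of i] nn[of i] by linarith
  show "(\<Sum>j\<in>UNIV. \<rho>$j * P$j$i) \<le> Rcal P \<rho> * \<rho>$i"
    using le[of i] rho_pos[rule_format, of i] by (simp add: divide_le_eq)
qed

lemma ln_ge_R:
  assumes x: "ereal g < xrho P \<rho>" and t: "0 \<le> t" "t \<le> g"
  shows "Rcal P \<rho> * t \<le> ln (1 + t)"
proof -
  obtain x0 where x0: "x0 \<in> {x. 0 < x \<and> ln (1 + x) \<ge> Rcal P \<rho> * x}" and gx: "ereal g < ereal x0"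
    using x unfolding xrho_def less_Sup_iff by blast
  have tx: "t \<le> x0" using gx t by simp
  have "Rcal P \<rho> * t = t / x0 * (Rcal P \<rho> * x0)" using x0 by simp
  also have "\<dots> \<le> t / x0 * ln (1 + x0)" using x0 t by (intro mult_left_mono) auto
  also have "\<dots> \<le> ln (1 + t)" by (rule log_chord) (use x0 t tx in auto)
  finally show ?thesis .
qed

lemma Gamma_from_xrho:
  assumes eps: "0 < eps" and X: "\<forall>i. ereal eps < ereal (\<rho>$i / G$i$i) * xrho P \<rho>"
  shows "(\<chi> i. eps * G$i$i / \<rho>$i) \<in> Gamma_set P"
proof -
  let ?\<gamma> = "(\<chi> i. eps * G$i$i / \<rho>$i) :: real^'d"
  define R where "R = Rcal P \<rho>"
  define t where "t k j = eps * G$k$j / \<rho>$j" for k j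
  have rp: "0 < \<rho>$j" for j using rho_pos by simp
  have Gp: "0 < G$j$j" for j using G_diag[of j] by simp
  have t0: "0 \<le> t k j" for k j unfolding t_def using eps G_nonneg[of k j] rp[of j] by simp
  have tle: "t k j \<le> eps * G$j$j / \<rho>$j" for k j unfolding t_def
    using eps rp[of j] G_le_diag[of k j] by (intro divide_right_mono mult_left_mono) auto
  have xg: "ereal (eps * G$j$j / \<rho>$j) < xrho P \<rho>" for j
  proof -
    have "ereal (eps / (\<rho>$j / G$j$j)) < xrho P \<rho>"
      using ereal_lt_mult[of "\<rho>$j / G$j$j" eps "xrho P \<rho>"] X rp[of j] Gp[of j] by simp
    thus ?thesis by simp
  qed
  have lnR: "R * t k j \<le> ln (1 + t k j)" for k j
    unfolding R_def by (rule ln_ge_R[OF xg t0 tle])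
  have gv: "gvec P ?\<gamma> j \<bullet> v = (\<Sum>k\<in>UNIV. ln (1 + t k j) * v$k)" for j v
    unfolding gvec_aa[OF less_imp_le[OF eps]] inner_vec_def aa_def t_def by simp
  show ?thesis unfolding Gamma_set_def
  proof (intro CollectI conjI allI impI)
    fix i show "0 \<le> ?\<gamma> $ i" using eps Gp[of i] rp[of i] by simp
  next
    fix i and v :: "real^'d"
    assume hv: "(\<forall>k. 0 \<le> v$k) \<and> v \<noteq> 0 \<and> v$i = 0"
    hence vnn: "\<And>k. 0 \<le> v$k" and vi: "v$i = 0" and vnz: "v \<noteq> 0" by auto
    have MaxG: "gvec P ?\<gamma> j \<bullet> v \<le> Max (range (\<lambda>j. gvec P ?\<gamma> j \<bullet> v))" for j
      by (rule Max_ge) auto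
    show "gvec P ?\<gamma> i \<bullet> v < Max (range (\<lambda>j. gvec P ?\<gamma> j \<bullet> v))"
    proof (cases "\<exists>k. 0 < t k i * v$k")
      case True
      then obtain k0 where k0: "0 < t k0 i * v$k0" by blast
      define w where "w j = (\<Sum>k\<in>UNIV. v$k * G$k$j)" for j
      have w0: "0 \<le> w j" for j unfolding w_def using vnn G_nonneg by (intro sum_nonneg mult_nonneg_nonneg) auto
      define m where "m = Max (range (\<lambda>j. w j / \<rho>$j))"
      obtain j0 where j0: "w j0 / \<rho>$j0 = m"
      proof -
        have "m \<in> range (\<lambda>j. w j / \<rho>$j)" unfolding m_def by (rule Max_in) auto
        thus ?thesis using that by blast
      qed
      have wm: "w l \<le> m * \<rho>$l" for l
      proof -
        have "w l / \<rho>$l \<le> m" unfolding m_def by (rule Max_ge) auto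
        thus ?thesis using rp[of l] by (simp add: divide_le_eq)
      qed
      have m0: "0 \<le> m" unfolding j0[symmetric] using w0[of j0] rp[of j0] by simp
      have wi: "w i = (\<Sum>l\<in>UNIV. w l * P$l$i)"
      proof -
        have "w i = (\<Sum>k\<in>UNIV. v$k * ((if k = i then 1 else 0) + (\<Sum>l\<in>UNIV. G$k$l * P$l$i)))"
          unfolding w_def by (subst G_eq2) rule
        also have "\<dots> = (\<Sum>k\<in>UNIV. \<Sum>l\<in>UNIV. v$k * G$k$l * P$l$i)"
          using vi by (simp add: distrib_left sum.distrib sum_distrib_left mult.assoc
              if_distrib[where f="\<lambda>x. _ * x"] cong: if_cong)
        also have "\<dots> = (\<Sum>l\<in>UNIV. w l * P$l$i)"
          unfolding w_def sum_distrib_right by (rule sum.swap)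
        finally show ?thesis .
      qed
      have wiR: "w i \<le> R * m * \<rho>$i"
      proof -
        have "w i \<le> (\<Sum>l\<in>UNIV. m * \<rho>$l * P$l$i)"
          unfolding wi using wm P_nonneg by (intro sum_mono mult_right_mono) auto
        also have "\<dots> = m * (\<Sum>l\<in>UNIV. \<rho>$l * P$l$i)"
          by (simp add: sum_distrib_left mult.assoc)
        also have "\<dots> \<le> m * (R * \<rho>$i)"
          unfolding R_def using Rcal_props(2)[of i] m0 by (rule mult_left_mono)
        finally show ?thesis by (simp add: mult_ac)
      qed
      have st: "(\<Sum>k\<in>UNIV. t k j * v$k) = eps / \<rho>$j * w j" for j
        unfolding t_def w_def by (simp add: sum_distrib_left mult_ac)
      have "gvec P ?\<gamma> i \<bullet> v < (\<Sum>k\<in>UNIV. t k i * v$k)"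
        unfolding gv
      proof (rule sum_strict_mono_ex1)
        show "\<forall>k\<in>UNIV. ln (1 + t k i) * v$k \<le> t k i * v$k"
          using vnn t0 by (blast intro: mult_right_mono ln_add_one_self_le_self)
        have "0 < t k0 i" "0 < v$k0" using k0 t0[of k0 i] vnn[of k0]
          by (auto simp: zero_less_mult_iff)
        thus "\<exists>k\<in>UNIV. ln (1 + t k i) * v$k < t k i * v$k"
          by (intro bexI[of _ k0]) (auto intro: mult_strict_right_mono ln_add_one_self_less_self)
      qed simp
      also have "\<dots> \<le> R * (\<Sum>k\<in>UNIV. t k j0 * v$k)"
      proof -
        have "eps / \<rho>$i * w i \<le> eps / \<rho>$i * (R * m * \<rho>$i)"
          using wiR eps rp[of i] by (intro mult_left_mono) auto
        also have "\<dots> = R * (eps / \<rho>$j0 * w j0)"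
          using rp[of i] rp[of j0] j0 by (simp add: field_simps)
        finally show ?thesis unfolding st .
      qed
      also have "\<dots> \<le> gvec P ?\<gamma> j0 \<bullet> v"
        unfolding gv sum_distrib_left
        using lnR vnn by (intro sum_mono) (simp add: mult.assoc[symmetric] mult_right_mono)
      also have "\<dots> \<le> Max (range (\<lambda>j. gvec P ?\<gamma> j \<bullet> v))" by (rule MaxG)
      finally show ?thesis .
    next
      case False
      have z: "ln (1 + t k i) * v$k = 0" for k
      proof -
        have "t k i * v$k = 0" using False t0[of k i] vnn[of k] 
          by (metis mult_nonneg_nonneg order_le_less)
        thus ?thesis by auto
      qed
      have gi0: "gvec P ?\<gamma> i \<bullet> v = 0" unfolding gv z by simp
      obtain k where vk: "0 < v$k"
      proof -
        have "\<exists>k. v$k \<noteq> 0" using vnz by (simp add: vec_eq_iff)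
        thus ?thesis using that vnn by (metis order_le_less)
      qed
      have tk: "0 < t k k" unfolding t_def using eps Gp[of k] rp[of k] by simp
      have "0 < ln (1 + t k k) * v$k" using tk vk by simp
      also have "\<dots> \<le> gvec P ?\<gamma> k \<bullet> v"
        unfolding gv using t0 vnn by (intro member_le_sum) auto
      also have "\<dots> \<le> Max (range (\<lambda>j. gvec P ?\<gamma> j \<bullet> v))" by (rule MaxG)
      finally show ?thesis using gi0 by simp
    qed
  qed
qed

end


lemma cneg_aux:
  fixes e r g m n :: real
  assumes e: "0 < e" and r: "0 < r" and g: "1 \<le> g" and m: "0 < m" and n: "0 \<le> n"
    and h: "e < r / g * (m / n - 1)"
  shows "e * n / r < e * m / (r + e * g)"
proof -
  have gp: "0 < g" using g by simp
  have nz: "n \<noteq> 0"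
  proof
    assume "n = 0"
    hence "r / g * (m / n - 1) < 0" using r gp by (simp add: divide_pos_pos)
    thus False using h e by simp
  qed
  hence np: "0 < n" using n by simp
  have "e * g < r * (m / n - 1)" using h gp by (simp add: field_simps)
  hence "e * g * n < r * (m / n - 1) * n" using np by (simp add: mult_strict_right_mono)
  also have "\<dots> = r * m - r * n" using np by (simp add: field_simps)
  finally have "n * (r + e * g) < r * m" by (simp add: algebra_simps)
  moreover have pos: "0 < r + e * g" using r e gp by (simp add: add_pos_pos)
  ultimately have "n < m * r / (r + e * g)" by (simp add: less_divide_eq algebra_simps)
  hence "n / r < m / (r + e * g)"
    using r by (simp add: divide_less_eq)
  thus ?thesis using e by (simp add: mult_strict_left_mono times_divide_eq_right[symmetric] del: times_divide_eq_right)
qed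

lemma Max_neg_Min:
  fixes d :: "'d::finite \<Rightarrow> real"
  assumes e: "0 < e"
  shows "Max (range (\<lambda>i. - e * d i)) = - e * Min (range d)"
proof (rule antisym)
  show "Max (range (\<lambda>i. - e * d i)) \<le> - e * Min (range d)"
  proof (rule Max.boundedI)
    fix x assume "x \<in> range (\<lambda>i. - e * d i)"
    then obtain i where "x = - e * d i" by blast
    moreover have "Min (range d) \<le> d i" by (rule Min_le) auto
    ultimately show "x \<le> - e * Min (range d)" using e by simp
  qed auto
  obtain i0 where "Min (range d) = d i0"
  proof -
    have "Min (range d) \<in> range d" by (rule Min_in) auto
    thus ?thesis using that by blast
  qed
  hence "- e * Min (range d) = - e * d i0" by simp
  also have "\<dots> \<le> Max (range (\<lambda>i. - e * d i))" by (rule Max_ge) auto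
  finally show "- e * Min (range d) \<le> Max (range (\<lambda>i. - e * d i))" .
qed

theorem corollary2p1:
  fixes lam mu \<nu> \<rho> :: "real^'d" and P :: "real^'d^'d"
  assumes lam_nonneg: "\<forall>i. 0 \<le> lam$i"
    and mu_pos: "\<forall>i. 0 < mu$i"
    and P_nonneg: "\<forall>i j. 0 \<le> P$i$j"
    and P_diag: "\<forall>i. P$i$i = 0"
    and P_sub: "\<forall>i. (\<Sum>j\<in>UNIV. P$i$j) \<le> 1"
    and A: "hypA lam mu P"
    and traffic: "\<forall>j. \<nu>$j = lam$j + (\<Sum>i\<in>UNIV. \<nu>$i * P$i$j)"
    and B: "\<forall>i. \<nu>$i < mu$i"
    and rho_pos: "\<forall>i. 0 < \<rho>$i"
    and rho_sub: "\<forall>i. (\<Sum>j\<in>UNIV. \<rho>$j * P$j$i) < \<rho>$i"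
  shows
   "(\<forall>eps. 0 < eps \<and> (\<chi> i. eps * Gmat P $i$i / \<rho>$i) \<in> Gamma_set P
        \<and> (\<forall>i. eps < \<rho>$i / Gmat P $i$i * (mu$i / \<nu>$i - 1)) \<longrightarrow>
       Limsup at_infty_lattice (\<lambda>x. ereal (jgen lam mu P (hfun P eps \<rho>) x / hfun P eps \<rho> x))
         = ereal (- eps * Min (range (\<lambda>i. mu$i / (\<rho>$i + eps * Gmat P $i$i) - \<nu>$i / \<rho>$i)))
       \<and> - eps * Min (range (\<lambda>i. mu$i / (\<rho>$i + eps * Gmat P $i$i) - \<nu>$i / \<rho>$i)) < 0)
  \<and> (\<forall>eps. 0 < eps
        \<and> (\<forall>i. ereal eps < ereal (\<rho>$i / Gmat P $i$i) * xrho P \<rho>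
              \<and> eps < \<rho>$i / Gmat P $i$i * (mu$i / \<nu>$i - 1)) \<longrightarrow>
       (\<chi> i. eps * Gmat P $i$i / \<rho>$i) \<in> Gamma_set P
       \<and> Limsup at_infty_lattice (\<lambda>x. ereal (jgen lam mu P (hfun P eps \<rho>) x / hfun P eps \<rho> x))
         = ereal (- eps * Min (range (\<lambda>i. mu$i / (\<rho>$i + eps * Gmat P $i$i) - \<nu>$i / \<rho>$i)))
       \<and> - eps * Min (range (\<lambda>i. mu$i / (\<rho>$i + eps * Gmat P $i$i) - \<nu>$i / \<rho>$i)) < 0)"
proof -
  interpret jn P \<rho> lam mu \<nu>
    by (unfold_locales; fact lam_nonneg mu_pos P_nonneg P_diag P_sub traffic rho_pos rho_sub)
  have part1: "Limsup at_infty_lattice (\<lambda>x. ereal (jgen lam mu P (hfun P eps \<rho>) x / hfun P eps \<rho> x))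
         = ereal (- eps * Min (range (\<lambda>i. mu$i / (\<rho>$i + eps * Gmat P $i$i) - \<nu>$i / \<rho>$i)))
       \<and> - eps * Min (range (\<lambda>i. mu$i / (\<rho>$i + eps * Gmat P $i$i) - \<nu>$i / \<rho>$i)) < 0"
    if e: "0 < eps" and gm: "(\<chi> i. eps * Gmat P $i$i / \<rho>$i) \<in> Gamma_set P"
      and c: "\<forall>i. eps < \<rho>$i / Gmat P $i$i * (mu$i / \<nu>$i - 1)" for eps
  proof -
    have cn: "\<forall>i. eps * \<nu>$i / \<rho>$i < eps * mu$i / (\<rho>$i + eps * Gmat P $i$i)"
      using cneg_aux[OF e _ G_diag _ nu_nonneg] c rho_pos mu_pos by blast
    interpret jne P \<rho> lam mu \<nu> eps
      by (unfold_locales; fact e gm cn)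
    have MM: "Mx = - eps * Min (range (\<lambda>i. mu$i / (\<rho>$i + eps * Gmat P $i$i) - \<nu>$i / \<rho>$i))"
    proof -
      have "cc = (\<lambda>i. - eps * (mu$i / (\<rho>$i + eps * Gmat P $i$i) - \<nu>$i / \<rho>$i))"
        unfolding cc_def by (auto simp: algebra_simps)
      thus ?thesis unfolding Mx_def using Max_neg_Min[OF e] by simp
    qed
    show ?thesis using limsup_eq Mx_neg unfolding fL_def MM by simp
  qed
  show ?thesis
  proof (intro conjI allI impI)
    fix eps assume "0 < eps \<and> (\<chi> i. eps * Gmat P $i$i / \<rho>$i) \<in> Gamma_set P
        \<and> (\<forall>i. eps < \<rho>$i / Gmat P $i$i * (mu$i / \<nu>$i - 1))"
    thus "Limsup at_infty_lattice (\<lambda>x. ereal (jgen lam mu P (hfun P eps \<rho>) x / hfun P eps \<rho> x))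
         = ereal (- eps * Min (range (\<lambda>i. mu$i / (\<rho>$i + eps * Gmat P $i$i) - \<nu>$i / \<rho>$i)))"
      "- eps * Min (range (\<lambda>i. mu$i / (\<rho>$i + eps * Gmat P $i$i) - \<nu>$i / \<rho>$i)) < 0"
      using part1 by blast+
  next
    fix eps assume h: "0 < eps
        \<and> (\<forall>i. ereal eps < ereal (\<rho>$i / Gmat P $i$i) * xrho P \<rho>
              \<and> eps < \<rho>$i / Gmat P $i$i * (mu$i / \<nu>$i - 1))"
    have gm: "(\<chi> i. eps * Gmat P $i$i / \<rho>$i) \<in> Gamma_set P"
      using Gamma_from_xrho h by blast
    show "(\<chi> i. eps * Gmat P $i$i / \<rho>$i) \<in> Gamma_set P" by (rule gm)
    show "Limsup at_infty_lattice (\<lambda>x. ereal (jgen lam mu P (hfun P eps \<rho>) x / hfun P eps \<rho> x))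
         = ereal (- eps * Min (range (\<lambda>i. mu$i / (\<rho>$i + eps * Gmat P $i$i) - \<nu>$i / \<rho>$i)))"
      "- eps * Min (range (\<lambda>i. mu$i / (\<rho>$i + eps * Gmat P $i$i) - \<nu>$i / \<rho>$i)) < 0"
      using part1[OF _ gm] h by blast+
  qed
qed


end
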